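(* Let $(\rho,\sigma)\in\mathfrak V$ and $P,Q\in W^{(l)}\setminus\{0\}$ with $[Q,P]\in K^\times$. If $[Q,P]_{\rho,\sigma}=0$, then there exists $(\rho'',\sigma'')\in\overline{\mathfrak V}$ with $(\rho'',\sigma'')<(\rho,\sigma)$ such that $[Q,P]_{\rho',\sigma'}=0$ for all $(\rho',\sigma')\in\mathfrak V$ with $(\rho'',\sigma'')<(\rho',\sigma')<(\rho,\sigma)$.
   Context: $K$ is a field of characteristic zero, $l\in\mathbb{N}$. $W^{(l)}$ is the associative $K$-algebra with $K$-basis $\{X^{i/l}Y^j:i\in\mathbb{Z},j\in\mathbb{N}_0\}$, powers of $X$ multiplying as Laurent monomials and $[Y,X^\alpha]=\alpha X^{\alpha-1}$ for $\alpha\in\frac1l\mathbb{Z}$. $\Psi^{(l)}(X^{i/l}Y^j)=x^{i/l}y^j\in K[x^{\pm1/l},y]$; supports are sets of exponents with nonzero coefficient. $\overline{\mathfrak V}=\{(\rho,\sigma)\in\mathbb{Z}^2:\gcd(\rho,\sigma)=1,\rho+\sigma\ge0\}$, $\mathfrak V$ the subset with $\rho+\sigma>0$. Total order on $\overline{\mathfrak V}$: $(1,-1)<(\rho,\sigma)<(-1,1)$ for $(\rho,\sigma)\in\mathfrak V$, and on $\mathfrak V$, $(\rho_1,\sigma_1)\le(\rho,\sigma)$ iff $\rho_1\sigma-\sigma_1\rho\ge0$. For $P\ne0$, $v_{\rho,\sigma}(P)=\max\{\rho a+\sigma b:(a,b)\in\mathrm{Supp}(P)\}$, $\ell_{\rho,\sigma}(P)$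 = sum of terms of $\Psi^{(l)}(P)$ attaining it. $[Q,P]_{\rho,\sigma}:=0$ if $[Q,P]=0$ or $v_{\rho,\sigma}([Q,P])<v_{\rho,\sigma}(Q)+v_{\rho,\sigma}(P)-(\rho+\sigma)$, and $:=\ell_{\rho,\sigma}([Q,P])$ otherwise. *)

theory Defs
  imports Complex_Main
begin

text \<open>An element of W^(l) is represented by its coefficient function:
  F (i, j) is the coefficient of the basis element X^(i/l) Y^j.  Elements of
  W^(l) are exactly the finitely supported such functions.\<close>

type_synonym 'k wl = "int \<times> nat \<Rightarrow> 'k"

definition wsupp :: "'k::zero wl \<Rightarrow> (int \<times> nat) set" where
  "wsupp F = {p. F p \<noteq> 0}"

definition is_wl :: "'k::zero wl \<Rightarrow> bool" where
  "is_wl F \<longleftrightarrow> finite (wsupp F)"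

definition falling :: "'k::field \<Rightarrow> nat \<Rightarrow> 'k" where
  "falling x m = (\<Prod>t<m. x - of_nat t)"

text \<open>Product in W^(l), from the normal-ordering rule
  Y^j X^b = sum_m (j choose m) b(b-1)...(b-m+1) X^(b-m) Y^(j-m), which follows from
  [Y, X^b] = b X^(b-1):
  (X^(i/l) Y^j)(X^(i'/l) Y^k) = sum_(m \<le> j) (j choose m) falling (i'/l) m X^((i+i'-l m)/l) Y^(j+k-m).\<close>
definition wmult :: "nat \<Rightarrow> 'k::field_char_0 wl \<Rightarrow> 'k wl \<Rightarrow> 'k wl" where
  "wmult l F G = (\<lambda>(a, b).
     \<Sum>((i, j), (i', k)) \<in> wsupp F \<times> wsupp G.
       \<Sum>m \<in> {m. m \<le> j \<and> i + i' - int l * int m = a \<and> j + k - m = b}.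
         F (i, j) * G (i', k) * of_nat (j choose m) * falling (of_int i' / of_nat l) m)"

definition wcomm :: "nat \<Rightarrow> 'k::field_char_0 wl \<Rightarrow> 'k wl \<Rightarrow> 'k wl" where
  "wcomm l Q P = (\<lambda>p. wmult l Q P p - wmult l P Q p)"

definition wconst :: "'k::zero \<Rightarrow> 'k wl" where
  "wconst c = (\<lambda>p. if p = (0, 0) then c else 0)"

definition wval :: "nat \<Rightarrow> int \<Rightarrow> int \<Rightarrow> 'k::zero wl \<Rightarrow> rat" where
  "wval l \<rho> \<sigma> F = Max ((\<lambda>(i, j). of_int \<rho> * (of_int i / of_nat l) + of_int \<sigma> * of_nat j) ` wsupp F)"

text \<open>Leading form: terms whose support point attains the valuation
  (as coefficient function, identifying W^(l) and K[x^(\<pm>1/l), y] via \<Psi>^(l)).\<close>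
definition wlead :: "nat \<Rightarrow> int \<Rightarrow> int \<Rightarrow> 'k::zero wl \<Rightarrow> 'k wl" where
  "wlead l \<rho> \<sigma> F = (\<lambda>(i, j).
     if of_int \<rho> * (of_int i / of_nat l) + of_int \<sigma> * of_nat j = wval l \<rho> \<sigma> F then F (i, j) else 0)"

definition wcomm_rs :: "nat \<Rightarrow> int \<Rightarrow> int \<Rightarrow> 'k::field_char_0 wl \<Rightarrow> 'k wl \<Rightarrow> 'k wl" where
  "wcomm_rs l \<rho> \<sigma> Q P =
     (if wcomm l Q P = (\<lambda>_. 0) \<or>
         wval l \<rho> \<sigma> (wcomm l Q P) < wval l \<rho> \<sigma> Q + wval l \<rho> \<sigma> P - of_int (\<rho> + \<sigma>)
      then (\<lambda>_. 0) else wlead l \<rho> \<sigma> (wcomm l Q P))"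

definition Vbar :: "(int \<times> int) set" where
  "Vbar = {(\<rho>, \<sigma>). gcd \<rho> \<sigma> = 1 \<and> \<rho> + \<sigma> \<ge> 0}"

definition Vset :: "(int \<times> int) set" where
  "Vset = {(\<rho>, \<sigma>). gcd \<rho> \<sigma> = 1 \<and> \<rho> + \<sigma> > 0}"

definition dir_le :: "int \<times> int \<Rightarrow> int \<times> int \<Rightarrow> bool" where
  "dir_le a b \<longleftrightarrow>
     a = (1, -1) \<or> b = (-1, 1) \<or>
     (a \<in> Vset \<and> b \<in> Vset \<and> fst a * snd b - snd a * fst b \<ge> 0)"

definition dir_less :: "int \<times> int \<Rightarrow> int \<times> int \<Rightarrow> bool" where
  "dir_less a b \<longleftrightarrow> dir_le a b \<and> a \<noteq> b"

end

theory Submission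
  imports Defs
begin

lemma wsupp_const: "c \<noteq> 0 \<Longrightarrow> wsupp (wconst c) = {(0,0)}"
  by (auto simp: wsupp_def wconst_def split: if_splits)

lemma wval_const: "c \<noteq> 0 \<Longrightarrow> wval l a b (wconst c) = 0"
  by (simp add: wval_def wsupp_const)

lemma rs_iff:
  fixes Q P :: "'k::field_char_0 wl"
  assumes c: "c \<noteq> 0" and e: "wcomm l Q P = wconst c"
  shows "wcomm_rs l a b Q P = (\<lambda>_. 0) \<longleftrightarrow> 0 < wval l a b Q + wval l a b P - of_int (a+b)"
proof -
  have nz: "wconst c \<noteq> (\<lambda>_. 0::'k)"
  proof
    assume "wconst c = (\<lambda>_. 0::'k)"
    hence "wconst c (0,0) = (0::'k)" by simp
    thus False using c by (simp add: wconst_def)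
  qed
  have "wlead l a b (wconst c) (0,0) = c"
    using c wval_const[OF c, of l a b] by (simp add: wlead_def wconst_def)
  hence nz2: "wlead l a b (wconst c) \<noteq> (\<lambda>_. 0)" using c by auto
  show ?thesis
    unfolding wcomm_rs_def e using nz nz2 wval_const[OF c, of l a b] by auto
qed

lemma val_ge:
  fixes F :: "'k::zero wl"
  assumes "is_wl F" "(i,j) \<in> wsupp F"
  shows "of_int a * (of_int i / of_nat l) + of_int b * of_nat j \<le> wval l a b F"
  unfolding wval_def
  by (rule Max_ge) (use assms in \<open>auto simp: is_wl_def\<close>)

lemma val_attained:
  fixes F :: "'k::zero wl"
  assumes "is_wl F" "F \<noteq> (\<lambda>_. 0)"
  shows "\<exists>i j. (i,j) \<in> wsupp F \<and> wval l a b F = of_int a * (of_int i / of_nat l) + of_int b * of_nat j"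
proof -
  have ne: "wsupp F \<noteq> {}" using assms(2) by (auto simp: wsupp_def)
  have "wval l a b F \<in> (\<lambda>(i, j). of_int a * (of_int i / of_nat l) + of_int b * of_nat j) ` wsupp F"
    unfolding wval_def by (rule Max_in) (use assms ne in \<open>auto simp: is_wl_def\<close>)
  thus ?thesis by auto
qed

theorem corollary3p4:
  fixes l :: nat and \<rho> \<sigma> :: int and P Q :: "'k::field_char_0 wl"
  assumes "l \<ge> 1"
    and "(\<rho>, \<sigma>) \<in> Vset"
    and "is_wl P" and "is_wl Q" and "P \<noteq> (\<lambda>_. 0)" and "Q \<noteq> (\<lambda>_. 0)"
    and "\<exists>c. c \<noteq> 0 \<and> wcomm l Q P = wconst c"
    and "wcomm_rs l \<rho> \<sigma> Q P = (\<lambda>_. 0)"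
  shows "\<exists>\<rho>'' \<sigma>''. (\<rho>'', \<sigma>'') \<in> Vbar \<and> dir_less (\<rho>'', \<sigma>'') (\<rho>, \<sigma>) \<and>
           (\<forall>\<rho>' \<sigma>'. (\<rho>', \<sigma>') \<in> Vset \<and> dir_less (\<rho>'', \<sigma>'') (\<rho>', \<sigma>') \<and>
                dir_less (\<rho>', \<sigma>') (\<rho>, \<sigma>) \<longrightarrow> wcomm_rs l \<rho>' \<sigma>' Q P = (\<lambda>_. 0))"
proof -
  obtain c where c: "c \<noteq> 0" "wcomm l Q P = wconst c" using assms(7) by blast
  have pos: "0 < wval l \<rho> \<sigma> Q + wval l \<rho> \<sigma> P - of_int (\<rho>+\<sigma>)"
    using rs_iff[OF c] assms(8) by blast
  obtain i0 j0 where p0: "(i0,j0) \<in> wsupp Q"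
    "wval l \<rho> \<sigma> Q = of_int \<rho> * (of_int i0 / of_nat l) + of_int \<sigma> * of_nat j0"
    using val_attained[OF assms(4,6)] by blast
  obtain i1 j1 where p1: "(i1,j1) \<in> wsupp P"
    "wval l \<rho> \<sigma> P = of_int \<rho> * (of_int i1 / of_nat l) + of_int \<sigma> * of_nat j1"
    using val_attained[OF assms(3,5)] by blast
  define \<alpha> :: rat where "\<alpha> = of_int i0 / of_nat l + of_int i1 / of_nat l - 1"
  define \<beta> :: rat where "\<beta> = of_nat j0 + of_nat j1 - 1"
  define g where "g = (\<lambda>a b. of_int a * \<alpha> + of_int b * \<beta>)"
  have gle: "g a b \<le> wval l a b Q + wval l a b P - of_int (a+b)" for a b
    using val_ge[OF assms(4) p0(1), of a l b] val_ge[OF assms(3) p1(1), of a l b]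
    unfolding g_def \<alpha>_def \<beta>_def by (simp add: algebra_simps)
  have gpos: "0 < g \<rho> \<sigma>"
    using pos p0(2) p1(2) unfolding g_def \<alpha>_def \<beta>_def by (simp add: algebra_simps)
  have rs: "\<rho> + \<sigma> > 0" "gcd \<rho> \<sigma> = 1" using assms(2) by (auto simp: Vset_def)
  obtain a0 b0 where ab: "a0 * \<sigma> + b0 * \<rho> = 1" using bezout_int[of \<sigma> \<rho>] rs(2)
    by (auto simp: gcd.commute)
  define u where "u = a0"
  define v where "v = - b0"
  have uv: "u * \<sigma> - v * \<rho> = 1" using ab by (simp add: u_def v_def)
  obtain N1 :: nat where N1: "\<bar>g u v\<bar> < of_nat N1 * g \<rho> \<sigma>"
    using ex_less_of_nat_mult[OF gpos] by blast
  define N :: int where "N = int N1 + \<bar>u + v\<bar> + 1"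
  have N1le: "of_nat N1 \<le> (of_int N :: rat)" unfolding N_def by simp
  have "of_nat N1 * g \<rho> \<sigma> \<le> of_int N * g \<rho> \<sigma>"
    using mult_right_mono[OF N1le] gpos by simp
  with N1 have gN: "\<bar>g u v\<bar> < of_int N * g \<rho> \<sigma>" by simp
  define r2 where "r2 = N * \<rho> + u"
  define s2 where "s2 = N * \<sigma> + v"
  have D: "r2 * \<sigma> - s2 * \<rho> = 1" unfolding r2_def s2_def using uv by (simp add: algebra_simps)
  have g2: "g r2 s2 = of_int N * g \<rho> \<sigma> + g u v"
    unfolding g_def r2_def s2_def by (simp add: algebra_simps)
  have g2pos: "0 < g r2 s2" using g2 gN by linarith
  have Nge: "N \<ge> \<bar>u+v\<bar> + 1" unfolding N_def by simp
  have "N * (\<rho> + \<sigma>) \<ge> N" using rs(1) Nge by (simp add: mult_le_cancel_left1 abs_if split: if_splits)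
  hence sum2: "r2 + s2 > 0" unfolding r2_def s2_def using Nge by (simp add: algebra_simps)
  have gcd2: "gcd r2 s2 = 1"
  proof -
    have "gcd r2 s2 dvd r2 * \<sigma> - s2 * \<rho>" by (simp add: dvd_diff)
    hence "gcd r2 s2 dvd 1" using D by simp
    thus ?thesis by simp
  qed
  have V2: "(r2, s2) \<in> Vset" using sum2 gcd2 by (simp add: Vset_def)
  have neq: "(r2, s2) \<noteq> (\<rho>, \<sigma>)" using D by (auto simp: algebra_simps)
  have less2: "dir_less (r2, s2) (\<rho>, \<sigma>)"
    using V2 assms(2) D neq by (simp add: dir_less_def dir_le_def)
  show ?thesis
  proof (intro exI conjI allI impI)
    show "(r2, s2) \<in> Vbar" using V2 by (simp add: Vset_def Vbar_def)
    show "dir_less (r2, s2) (\<rho>, \<sigma>)" by (rule less2)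
    fix \<rho>' \<sigma>'
    assume h: "(\<rho>', \<sigma>') \<in> Vset \<and> dir_less (r2, s2) (\<rho>', \<sigma>') \<and> dir_less (\<rho>', \<sigma>') (\<rho>, \<sigma>)"
    have V': "\<rho>' + \<sigma>' > 0" using h by (simp add: Vset_def)
    have r2V: "(r2, s2) \<noteq> (1, -1)" "(r2,s2) \<noteq> (-1,1)" using sum2 by auto
    have r'V: "(\<rho>', \<sigma>') \<noteq> (1, -1)" "(\<rho>', \<sigma>') \<noteq> (-1,1)" using V' by auto
    have rV: "(\<rho>, \<sigma>) \<noteq> (-1,1)" using rs by auto
    have B: "r2 * \<sigma>' - s2 * \<rho>' \<ge> 0" using h r2V r'V unfolding dir_less_def dir_le_def by auto
    have A: "\<rho>' * \<sigma> - \<sigma>' * \<rho> \<ge> 0" using h r'V rV unfolding dir_less_def dir_le_def by auto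
    define Aa where "Aa = \<rho>' * \<sigma> - \<sigma>' * \<rho>"
    define Bb where "Bb = r2 * \<sigma>' - s2 * \<rho>'"
    have e1: "\<rho>' = Aa * r2 + Bb * \<rho>"
    proof -
      have "\<rho>' * (r2 * \<sigma> - s2 * \<rho>) = Aa * r2 + Bb * \<rho>" unfolding Aa_def Bb_def by algebra
      thus ?thesis using D by simp
    qed
    have e2: "\<sigma>' = Aa * s2 + Bb * \<sigma>"
    proof -
      have "\<sigma>' * (r2 * \<sigma> - s2 * \<rho>) = Aa * s2 + Bb * \<sigma>" unfolding Aa_def Bb_def by algebra
      thus ?thesis using D by simp
    qed
    have ge: "g \<rho>' \<sigma>' = of_int Aa * g r2 s2 + of_int Bb * g \<rho> \<sigma>"
      unfolding g_def by (subst e1, subst e2) (simp add: algebra_simps)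
    have A0: "Aa \<ge> 0" "Bb \<ge> 0" using A B unfolding Aa_def Bb_def by auto
    have "Aa > 0 \<or> Bb > 0"
    proof (rule ccontr)
      assume "\<not> (Aa > 0 \<or> Bb > 0)"
      hence "Aa = 0" "Bb = 0" using A0 by auto
      hence "\<rho>' = 0" "\<sigma>' = 0" using e1 e2 by auto
      thus False using V' by simp
    qed
    hence "0 < g \<rho>' \<sigma>'"
    proof
      assume "Aa > 0"
      hence "0 < of_int Aa * g r2 s2" using g2pos by simp
      moreover have "0 \<le> of_int Bb * g \<rho> \<sigma>" using A0 gpos by simp
      ultimately show ?thesis using ge by linarith
    next
      assume "Bb > 0"
      hence "0 < of_int Bb * g \<rho> \<sigma>" using gpos by simp
      moreover have "0 \<le> of_int Aa * g r2 s2" using A0 g2pos by simp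
      ultimately show ?thesis using ge by linarith
    qed
    hence "0 < wval l \<rho>' \<sigma>' Q + wval l \<rho>' \<sigma>' P - of_int (\<rho>'+\<sigma>')"
      using gle[of \<rho>' \<sigma>'] by linarith
    thus "wcomm_rs l \<rho>' \<sigma>' Q P = (\<lambda>_. 0)" using rs_iff[OF c] by blast
  qed
qed

end
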